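(* Let $A,C$ be logically independent events and consider assessments with $P(C|A)=x>0$. Then $(C|A)\wedge\bar C=x\,\bar A\bar C$, and the iterated conditional $\bar A\,|\,\big((C|A)\wedge\bar C\big)$, defined as $\bar A\wedge(C|A)\wedge\bar C+\mu\,(1-(C|A)\wedge\bar C)$ with $\mu$ its prevision, equals $1$ (i.e. its only coherent prevision is $\mu=1$ and it takes value $1$ in every outcome). *)

theory Defs
  imports Complex_Main
begin

text \<open>Finite-outcome (de Finetti / Gilio-Sanfilippo) setting: outcomes are the elements
of a set Omega, events are subsets of Omega, random quantities are real functions on outcomes.\<close>

definition ind :: "'w set \<Rightarrow> 'w \<Rightarrow> real" where
  "ind E w = (if w \<in> E then 1 else 0)"

definition log_indep :: "'w set \<Rightarrow> 'w set \<Rightarrow> 'w set \<Rightarrow> bool" where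
  "log_indep Om A C \<longleftrightarrow>
     (A \<inter> C \<noteq> {}) \<and> (A \<inter> (Om - C) \<noteq> {}) \<and>
     ((Om - A) \<inter> C \<noteq> {}) \<and> ((Om - A) \<inter> (Om - C) \<noteq> {})"

text \<open>Conditional event E|H with prevision x: 1 if EH true, 0 if (not E)H true, x if H false.\<close>
definition cond_event :: "'w set \<Rightarrow> 'w set \<Rightarrow> real \<Rightarrow> 'w \<Rightarrow> real" where
  "cond_event E H x w = (if w \<in> H then (if w \<in> E then 1 else 0) else x)"

text \<open>Conjunction (E|H) and (F|K) (Gilio-Sanfilippo), with x = P(E|H), y = P(F|K),
  z = prevision of the conjunction: 1 if EHFK true, 0 if (not E)H or (not F)K true,
  x if H false and FK true, y if EH true and K false, z if H and K both false.\<close>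
definition conj_ce ::
  "'w set \<Rightarrow> 'w set \<Rightarrow> real \<Rightarrow> 'w set \<Rightarrow> 'w set \<Rightarrow> real \<Rightarrow> real \<Rightarrow> 'w \<Rightarrow> real" where
  "conj_ce E H x F K y z w =
     (if (w \<in> H \<and> w \<notin> E) \<or> (w \<in> K \<and> w \<notin> F) then 0
      else if w \<in> H \<and> w \<in> K then 1
      else if w \<in> K then x
      else if w \<in> H then y
      else z)"

text \<open>Iterated conditional E | Z, for an event E and a random quantity Z, with prevision mu:
  (E and Z) + mu (1 - Z), where the conjunction of the (unconditional) event E with Z is E*Z.\<close>
definition iter_cond :: "'w set \<Rightarrow> ('w \<Rightarrow> real) \<Rightarrow> real \<Rightarrow> 'w \<Rightarrow> real" where
  "iter_cond E Z mu w = ind E w * Z w + mu * (1 - Z w)"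

text \<open>Coherence of the prevision mu of the iterated conditional E | Z (betting scheme):
  for every stake s, the random gain s (E|Z - mu) is not uniformly negative over the outcomes
  in which the bet is not called off, i.e. the outcomes where Z is nonzero.\<close>
definition coherent_iter :: "'w set \<Rightarrow> 'w set \<Rightarrow> ('w \<Rightarrow> real) \<Rightarrow> real \<Rightarrow> bool" where
  "coherent_iter Om E Z mu \<longleftrightarrow>
     (\<forall>s::real. \<not> (\<forall>w \<in> Om. Z w \<noteq> 0 \<longrightarrow> s * (iter_cond E Z mu w - mu) < 0))"

end

theory Submission
  imports Defs
begin

theorem mainTheorem9:
  fixes Om A C :: "'w set" and x y z :: real
  assumes "A \<subseteq> Om" and "C \<subseteq> Om"
    and "log_indep Om A C"
    and "0 < x" and "x \<le> 1"
  defines "Z \<equiv> conj_ce C A x (Om - C) Om y z"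
  shows "(\<forall>w \<in> Om. Z w = x * ind (Om - A) w * ind (Om - C) w)
         \<and> (\<forall>mu. coherent_iter Om (Om - A) Z mu \<longleftrightarrow> mu = 1)
         \<and> (\<forall>w \<in> Om. iter_cond (Om - A) Z 1 w = 1)"
proof -
  have Zv: "\<And>w. w \<in> Om \<Longrightarrow> Z w = (if w \<notin> A \<and> w \<notin> C then x else 0)"
    unfolding Z_def conj_ce_def by auto
  have P1: "\<forall>w \<in> Om. Z w = x * ind (Om - A) w * ind (Om - C) w"
    using Zv by (auto simp: ind_def)
  obtain w0 where w0: "w0 \<in> Om" "w0 \<notin> A" "w0 \<notin> C"
    using assms(3) unfolding log_indep_def by blast
  have gain: "\<And>w mu. w \<in> Om \<Longrightarrow> Z w \<noteq> 0 \<Longrightarrow> iter_cond (Om - A) Z mu w - mu = x * (1 - mu)"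
  proof -
    fix w mu assume w: "w \<in> Om" "Z w \<noteq> 0"
    then have "w \<notin> A" "w \<notin> C" "Z w = x" using Zv[OF w(1)] by (auto split: if_splits)
    then show "iter_cond (Om - A) Z mu w - mu = x * (1 - mu)"
      using w by (simp add: iter_cond_def ind_def algebra_simps)
  qed
  have Zw0: "Z w0 \<noteq> 0" using Zv[OF w0(1)] w0 assms(4) by simp
  have P2: "\<forall>mu. coherent_iter Om (Om - A) Z mu \<longleftrightarrow> mu = 1"
  proof (intro allI iffI)
    fix mu assume c: "coherent_iter Om (Om - A) Z mu"
    show "mu = 1"
    proof (rule ccontr)
      assume ne: "mu \<noteq> 1"
      define s where "s = - (1 - mu)"
      have "\<forall>w \<in> Om. Z w \<noteq> 0 \<longrightarrow> s * (iter_cond (Om - A) Z mu w - mu) < 0"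
      proof (intro ballI impI)
        fix w assume "w \<in> Om" "Z w \<noteq> 0"
        then have g: "iter_cond (Om - A) Z mu w - mu = x * (1 - mu)" using gain by blast
        have "s * (iter_cond (Om - A) Z mu w - mu) = - (x * (1 - mu)^2)"
          unfolding g s_def by (simp add: power2_eq_square algebra_simps)
        moreover have "(1 - mu)^2 > 0" using ne by simp
        ultimately show "s * (iter_cond (Om - A) Z mu w - mu) < 0"
          using assms(4) by (simp add: mult_pos_pos)
      qed
      then show False using c unfolding coherent_iter_def by blast
    qed
  next
    fix mu :: real assume "mu = 1"
    then show "coherent_iter Om (Om - A) Z mu"
      unfolding coherent_iter_def using gain w0(1) Zw0 by fastforce
  qed
  have P3: "\<forall>w \<in> Om. iter_cond (Om - A) Z 1 w = 1"
  proof
    fix w assume w: "w \<in> Om"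
    show "iter_cond (Om - A) Z 1 w = 1"
      using Zv[OF w] w by (auto simp: iter_cond_def ind_def)
  qed
  show ?thesis using P1 P2 P3 by blast
qed

end
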